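(* Let $S=\mathbb{C}[x_{ij}: 1\le i\le 4,\ 1\le j\le 3]$, let $M=(x_{ij})$ be the generic $4\times 3$ matrix, and for $i=1,2,3$ let $f_i$ be the determinant of the $3\times 3$ submatrix of $M$ obtained by deleting row $i$. Then $f_1,f_2,f_3$ are cubic forms that do not form a regular sequence and whose collective strength is exactly $2$. Consequently $N(3,3)>2$.
   Context: The strength of a homogeneous element $f$ of a standard graded polynomial ring is the minimal integer $s\ge 0$ such that $f=\sum_{i=1}^{s+1}g_ih_i$ with all $g_i,h_i$ homogeneous of positive degree (or $\infty$ if none exists); constants, including $0$, have strength $-1$. The collective strength of a finite set of homogeneous elements of the same degree is the minimal strength of a nontrivial $\mathbb{C}$-linear combination of them. $N(r,d)$ denotes the least integer $N$ such that any $r$ homogeneous polynomials of degree $d$ with collective strength at least $N$ form a regular sequence. *)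

theory Defs
  imports Complex_Main "HOL-Library.Poly_Mapping" "HOL-Library.Extended_Real" "HOL-Combinatorics.Permutations"
begin

text \<open>Polynomials with complex coefficients in the variables x_0, x_1, ... :
  a polynomial maps exponent vectors (finitely supported nat => nat) to coefficients.\<close>
type_synonym cpoly = "(nat \<Rightarrow>\<^sub>0 nat) \<Rightarrow>\<^sub>0 complex"

definition polys_in :: "nat set \<Rightarrow> cpoly set" where
  "polys_in V = {p. \<forall>m\<in>Poly_Mapping.keys p. Poly_Mapping.keys m \<subseteq> V}"

definition mdeg :: "(nat \<Rightarrow>\<^sub>0 nat) \<Rightarrow> nat" where
  "mdeg m = (\<Sum>i\<in>Poly_Mapping.keys m. Poly_Mapping.lookup m i)"

definition homogeneous :: "nat \<Rightarrow> cpoly \<Rightarrow> bool" where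
  "homogeneous d p \<longleftrightarrow> (\<forall>m\<in>Poly_Mapping.keys p. mdeg m = d)"

definition const_poly :: "complex \<Rightarrow> cpoly" where
  "const_poly c = Poly_Mapping.single 0 c"

definition var :: "nat \<Rightarrow> cpoly" where
  "var i = Poly_Mapping.single (Poly_Mapping.single i 1) 1"

definition is_constant :: "cpoly \<Rightarrow> bool" where
  "is_constant p \<longleftrightarrow> (\<forall>m\<in>Poly_Mapping.keys p. m = 0)"

definition pos_form :: "nat set \<Rightarrow> cpoly \<Rightarrow> bool" where
  "pos_form V g \<longleftrightarrow> g \<in> polys_in V \<and> (\<exists>d>0. homogeneous d g)"

text \<open>Strength in the polynomial ring over V; -1 for constants, \<infinity> if no decomposition.\<close>
definition strength :: "nat set \<Rightarrow> cpoly \<Rightarrow> ereal" where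
  "strength V f = (if is_constant f then -1 else
     Inf {ereal (real s) | s::nat. \<exists>g h. (\<forall>i\<le>s. pos_form V (g i) \<and> pos_form V (h i))
                                  \<and> f = (\<Sum>i\<le>s. g i * h i)})"

definition coll_strength :: "nat set \<Rightarrow> cpoly list \<Rightarrow> ereal" where
  "coll_strength V fs = Inf {strength V (\<Sum>i<length fs. const_poly (c i) * fs ! i) | c.
       \<exists>i<length fs. c i \<noteq> 0}"

definition ideal_gen :: "nat set \<Rightarrow> cpoly list \<Rightarrow> cpoly set" where
  "ideal_gen V gs = {\<Sum>j<length gs. a j * gs ! j | a. \<forall>j<length gs. a j \<in> polys_in V}"

definition regular_seq :: "nat set \<Rightarrow> cpoly list \<Rightarrow> bool" where
  "regular_seq V fs \<longleftrightarrow>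
     (\<forall>i<length fs. \<forall>g\<in>polys_in V.
        g * fs ! i \<in> ideal_gen V (take i fs) \<longrightarrow> g \<in> ideal_gen V (take i fs))
     \<and> 1 \<notin> ideal_gen V fs"

definition N_rd :: "nat \<Rightarrow> nat \<Rightarrow> ereal" where
  "N_rd r d = Inf {ereal (real_of_int N) | N::int. \<forall>n fs.
      (length fs = r \<and> (\<forall>f\<in>set fs. f \<in> polys_in {..<n} \<and> homogeneous d f)
       \<and> coll_strength {..<n} fs \<ge> ereal (real_of_int N)) \<longrightarrow> regular_seq {..<n} fs}"

definition det3 :: "(nat \<Rightarrow> nat \<Rightarrow> cpoly) \<Rightarrow> cpoly" where
  "det3 A = (\<Sum>\<sigma> | \<sigma> permutes {..<3}. of_int (sign \<sigma>) * (\<Prod>j<3. A (\<sigma> j) j))"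

definition genM :: "nat \<Rightarrow> nat \<Rightarrow> cpoly" where
  "genM i j = var (3 * i + j)"

text \<open>Maximal minor deleting row k (0-based): remaining rows in order.\<close>
definition minor_del :: "nat \<Rightarrow> cpoly" where
  "minor_del k = det3 (\<lambda>a b. genM (if a < k then a else a + 1) b)"

end

theory Submission
  imports Defs
begin

lemma det3_explicit:
  fixes A :: "nat \<Rightarrow> nat \<Rightarrow> cpoly"
  shows "det3 A = A 0 0 * A 1 1 * A 2 2 + A 1 0 * A 2 1 * A 0 2 + A 2 0 * A 0 1 * A 1 2
     - A 0 0 * A 2 1 * A 1 2 - A 1 0 * A 0 1 * A 2 2 - A 2 0 * A 1 1 * A 0 2"
proof -
  have u: "{..<3::nat} = insert 0 (insert 1 {2})" by auto
  have f1: "finite (insert (1::nat) {2})" "(0::nat) \<notin> insert 1 {2}" by auto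
  have f2: "finite {2::nat}" "(1::nat) \<notin> {2}" by auto
  show ?thesis
    unfolding det3_def u
    unfolding sum_over_permutations_insert[OF f1]
    unfolding sum_over_permutations_insert[OF f2]
    unfolding permutes_sing
    by (simp add: sign_swap_id permutation_swap_id sign_compose transpose_def algebra_simps)
qed

definition mon :: "(nat \<Rightarrow>\<^sub>0 nat) \<Rightarrow> (nat \<Rightarrow> complex) \<Rightarrow> complex" where
  "mon m x = (\<Prod>i\<in>Poly_Mapping.keys m. x i ^ Poly_Mapping.lookup m i)"

definition ev :: "cpoly \<Rightarrow> (nat \<Rightarrow> complex) \<Rightarrow> complex" where
  "ev p x = (\<Sum>m\<in>Poly_Mapping.keys p. Poly_Mapping.lookup p m * mon m x)"

lemma mon_superset: "finite S \<Longrightarrow> Poly_Mapping.keys m \<subseteq> S \<Longrightarrow>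
   mon m x = (\<Prod>i\<in>S. x i ^ Poly_Mapping.lookup m i)"
  unfolding mon_def
  by (rule prod.mono_neutral_left) (auto simp: in_keys_iff)

lemma mon_add: "mon (m1 + m2) x = mon m1 x * mon m2 x"
proof -
  let ?S = "Poly_Mapping.keys m1 \<union> Poly_Mapping.keys m2"
  have k: "Poly_Mapping.keys (m1+m2) \<subseteq> ?S" by (rule keys_add)
  show ?thesis
    by (subst mon_superset[OF _ k], simp, subst mon_superset[of ?S m1], simp, simp,
        subst mon_superset[of ?S m2], simp, simp)
       (simp add: lookup_add power_add prod.distrib)
qed

lemma mon_zero[simp]: "mon 0 x = 1" by (simp add: mon_def)

lemma ev_superset: "finite S \<Longrightarrow> Poly_Mapping.keys p \<subseteq> S \<Longrightarrow>
   ev p x = (\<Sum>m\<in>S. Poly_Mapping.lookup p m * mon m x)"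
  unfolding ev_def
  by (rule sum.mono_neutral_left) (auto simp: in_keys_iff)

lemma ev_add: "ev (p + q) x = ev p x + ev q x"
proof -
  let ?S = "Poly_Mapping.keys p \<union> Poly_Mapping.keys q"
  have k: "Poly_Mapping.keys (p+q) \<subseteq> ?S" by (rule keys_add)
  show ?thesis
    by (subst ev_superset[OF _ k], simp, subst ev_superset[of ?S p], simp, simp,
        subst ev_superset[of ?S q], simp, simp)
       (simp add: lookup_add distrib_right sum.distrib)
qed

lemma ev_zero[simp]: "ev 0 x = 0" by (simp add: ev_def)

lemma ev_sum: "ev (sum f A) x = (\<Sum>a\<in>A. ev (f a) x)"
  by (induction A rule: infinite_finite_induct) (auto simp: ev_add)

lemma ev_uminus: "ev (- p) x = - ev p x"
proof -
  have "ev p x + ev (- p) x = 0" using ev_add[of p "-p" x] by simp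
  then show ?thesis by (metis add_eq_0_iff)
qed

lemma ev_diff: "ev (p - q) x = ev p x - ev q x"
  using ev_add[of p "-q" x] ev_uminus[of q x] by simp

lemma ev_single[simp]: "ev (Poly_Mapping.single m c) x = c * mon m x"
  by (simp add: ev_def)

lemma sum_monomials: "p = (\<Sum>m\<in>Poly_Mapping.keys p. Poly_Mapping.single m (Poly_Mapping.lookup p m))"
proof (rule poly_mapping_eqI)
  fix k
  show "Poly_Mapping.lookup p k = Poly_Mapping.lookup (\<Sum>m\<in>Poly_Mapping.keys p. Poly_Mapping.single m (Poly_Mapping.lookup p m)) k"
    by (simp add: lookup_sum lookup_single when_def in_keys_iff)
qed

lemma ev_single_mult: "ev (Poly_Mapping.single m c * q) x = c * mon m x * ev q x"
proof -
  have "Poly_Mapping.single m c * q = Poly_Mapping.single m c * (\<Sum>m'\<in>Poly_Mapping.keys q. Poly_Mapping.single m' (Poly_Mapping.lookup q m'))"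
    by (subst sum_monomials[of q], rule refl)
  also have "\<dots> = (\<Sum>m'\<in>Poly_Mapping.keys q. Poly_Mapping.single (m + m') (c * Poly_Mapping.lookup q m'))"
    by (simp add: sum_distrib_left mult_single)
  finally have e: "Poly_Mapping.single m c * q = \<dots>" .
  show ?thesis
    by (simp only: e ev_sum ev_single) (simp add: mon_add ev_def sum_distrib_left algebra_simps)
qed

lemma ev_mult: "ev (p * q) x = ev p x * ev q x"
proof -
  have "p * q = (\<Sum>m\<in>Poly_Mapping.keys p. Poly_Mapping.single m (Poly_Mapping.lookup p m) * q)"
    by (subst sum_monomials[of p]) (simp add: sum_distrib_right)
  then have "ev (p * q) x = (\<Sum>m\<in>Poly_Mapping.keys p. Poly_Mapping.lookup p m * mon m x * ev q x)"
    by (simp only: ev_sum ev_single_mult)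
  then show ?thesis
    by (simp add: ev_def[of p] sum_distrib_right)
qed

lemma ev_var[simp]: "ev (var i) x = x i"
  by (simp add: var_def mon_def)

lemma ev_const[simp]: "ev (const_poly c) x = c"
  by (simp add: const_poly_def mon_def)

lemma ev_one[simp]: "ev 1 x = 1"
  by (simp add: ev_def mon_def)

definition dd :: "(nat \<Rightarrow> complex) \<Rightarrow> complex" where
  "dd y = y 0*y 4*y 8 + y 3*y 7*y 2 + y 6*y 1*y 5 - y 0*y 7*y 5 - y 3*y 1*y 8 - y 6*y 4*y 2"

definition pm :: "nat \<Rightarrow> nat \<Rightarrow> nat \<Rightarrow> nat \<Rightarrow> complex" where
  "pm s0 s1 s2 = (\<lambda>t. if t = s0 \<or> t = 3 + s1 \<or> t = 6 + s2 then 1 else 0)"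

definition ztab :: "nat \<Rightarrow> nat \<Rightarrow> nat \<Rightarrow> complex" where
  "ztab p q =    (if p = 0 \<and> q = 1 then pm 2 0 1 else
   (if p = 0 \<and> q = 2 then pm 1 0 2 else
   (if p = 0 \<and> q = 3 then pm 1 2 0 else
   (if p = 0 \<and> q = 4 then pm 1 2 0 else
   (if p = 0 \<and> q = 5 then pm 1 0 2 else
   (if p = 0 \<and> q = 6 then pm 1 0 2 else
   (if p = 0 \<and> q = 7 then pm 1 0 2 else
   (if p = 0 \<and> q = 8 then pm 1 2 0 else
   (if p = 1 \<and> q = 2 then pm 0 1 2 else
   (if p = 1 \<and> q = 3 then pm 0 2 1 else
   (if p = 1 \<and> q = 4 then pm 0 2 1 else
   (if p = 1 \<and> q = 5 then pm 0 1 2 else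
   (if p = 1 \<and> q = 6 then pm 0 1 2 else
   (if p = 1 \<and> q = 7 then pm 0 1 2 else
   (if p = 1 \<and> q = 8 then pm 0 2 1 else
   (if p = 2 \<and> q = 3 then pm 0 1 2 else
   (if p = 2 \<and> q = 4 then pm 0 2 1 else
   (if p = 2 \<and> q = 5 then pm 0 1 2 else
   (if p = 2 \<and> q = 6 then pm 0 2 1 else
   (if p = 2 \<and> q = 7 then pm 0 1 2 else
   (if p = 2 \<and> q = 8 then pm 0 2 1 else
   (if p = 3 \<and> q = 4 then pm 0 2 1 else
   (if p = 3 \<and> q = 5 then pm 0 1 2 else
   (if p = 3 \<and> q = 6 then pm 0 1 2 else
   (if p = 3 \<and> q = 7 then pm 0 1 2 else
   (if p = 3 \<and> q = 8 then pm 0 2 1 else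
   (if p = 4 \<and> q = 5 then pm 1 0 2 else
   (if p = 4 \<and> q = 6 then pm 0 2 1 else
   (if p = 4 \<and> q = 7 then pm 1 0 2 else
   (if p = 4 \<and> q = 8 then pm 1 2 0 else
   (if p = 5 \<and> q = 6 then pm 0 1 2 else
   (if p = 5 \<and> q = 7 then pm 1 0 2 else
   (if p = 5 \<and> q = 8 then pm 2 0 1 else
   (if p = 6 \<and> q = 7 then pm 0 1 2 else
   (if p = 6 \<and> q = 8 then pm 0 2 1 else
   (if p = 7 \<and> q = 8 then pm 1 2 0 else
    pm 0 1 2))))))))))))))))))))))))))))))))))))"

lemma pair_ok_all: "\<forall>q\<in>{..<9}. \<forall>p\<in>{..<q}. \<forall>u v. dd ((ztab p q)(p:=u, q:=v)) \<noteq> 0"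
  by (simp add: lessThan_nat_numeral lessThan_Suc ztab_def dd_def pm_def)

lemma pair_ok: "p < q \<Longrightarrow> q < 9 \<Longrightarrow> dd ((ztab p q)(p:=u, q:=v)) \<noteq> 0"
  using pair_ok_all by auto

lemma pair_ok': assumes "p \<noteq> q" "p < 9" "q < 9" shows "\<exists>z. \<forall>u v. dd (z(p:=u, q:=v)) \<noteq> 0"
proof (cases "p < q")
  case True then show ?thesis using pair_ok assms by blast
next
  case False
  then have "q < p" using assms by simp
  then have "\<forall>u v. dd ((ztab q p)(p:=u, q:=v)) \<noteq> 0"
    using pair_ok[of q p] assms by (simp add: fun_upd_twist)
  then show ?thesis by blast
qed

lemma sum_upd:
  fixes a z :: "nat \<Rightarrow> complex"
  assumes "finite S" "p \<in> S" "q \<in> S" "p \<noteq> q"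
  shows "(\<Sum>t\<in>S. a t * (z(p:=u, q:=v)) t) = (\<Sum>t\<in>S. a t * z t) + a p * (u - z p) + a q * (v - z q)"
proof -
  have e: "\<And>t. a t * (z(p:=u, q:=v)) t = a t * z t + (if t = p then a p * (u - z p) else 0) + (if t = q then a q * (v - z q) else 0)"
    using assms(4) by (auto simp: algebra_simps)
  show ?thesis
    unfolding e sum.distrib using assms by (simp add: sum.delta)
qed

lemma one_eq: "\<exists>y. (\<Sum>t<9. a t * y t) = 0 \<and> dd y \<noteq> 0"
proof (cases "\<forall>t<9. a t = 0")
  case True
  then show ?thesis by (intro exI[of _ "pm 0 1 2"]) (simp add: dd_def pm_def)
next
  case False
  then obtain p where p: "p < 9" "a p \<noteq> 0" by auto
  define q where "q = (if p = 0 then 1 else (0::nat))"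
  have q: "q < 9" "p \<noteq> q" unfolding q_def by auto
  obtain z where z: "\<And>u v. dd (z(p:=u, q:=v)) \<noteq> 0" using pair_ok'[OF q(2) p(1) q(1)] by blast
  define u where "u = z p - (\<Sum>t<9. a t * z t) / a p"
  have "(\<Sum>t<9. a t * (z(p:=u, q:=z q)) t) = (\<Sum>t<9. a t * z t) + a p * (u - z p) + a q * (z q - z q)"
    by (rule sum_upd) (use p q in auto)
  also have "\<dots> = 0" using p(2) by (simp add: u_def field_simps)
  finally show ?thesis using z by blast
qed

lemma lemma9: "\<exists>y. (\<Sum>t<9. a t * y t) = 0 \<and> (\<Sum>t<9. b t * y t) = 0 \<and> dd y \<noteq> 0"
proof (cases "\<exists>p<9. \<exists>q<9. a p * b q - a q * b p \<noteq> 0")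
  case True
  then obtain p q where pq: "p < 9" "q < 9" "a p * b q - a q * b p \<noteq> 0" by blast
  then have ne: "p \<noteq> q" by auto
  obtain z where z: "\<And>u v. dd (z(p:=u, q:=v)) \<noteq> 0" using pair_ok'[OF ne pq(1,2)] by blast
  define A where "A = (\<Sum>t<9. a t * z t)"
  define B where "B = (\<Sum>t<9. b t * z t)"
  define D where "D = a p * b q - a q * b p"
  define u where "u = z p + (a q * B - b q * A) / D"
  define v where "v = z q + (b p * A - a p * B) / D"
  have D: "D \<noteq> 0" using pq by (simp add: D_def)
  have "(\<Sum>t<9. a t * (z(p:=u, q:=v)) t) = A + a p * (u - z p) + a q * (v - z q)"
    unfolding A_def by (rule sum_upd) (use pq ne in auto)
  also have "\<dots> = 0" using D by (simp add: u_def v_def D_def field_simps)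
  finally have 1: "(\<Sum>t<9. a t * (z(p:=u, q:=v)) t) = 0" .
  have "(\<Sum>t<9. b t * (z(p:=u, q:=v)) t) = B + b p * (u - z p) + b q * (v - z q)"
    unfolding B_def by (rule sum_upd) (use pq ne in auto)
  also have "\<dots> = 0" using D by (simp add: u_def v_def D_def field_simps)
  finally have 2: "(\<Sum>t<9. b t * (z(p:=u, q:=v)) t) = 0" .
  show ?thesis using 1 2 z by blast
next
  case False
  then have mz: "\<And>p q. p < 9 \<Longrightarrow> q < 9 \<Longrightarrow> a p * b q = a q * b p" by auto
  show ?thesis
  proof (cases "\<forall>t<9. a t = 0")
    case True
    obtain y where "(\<Sum>t<9. b t * y t) = 0" "dd y \<noteq> 0" using one_eq[of b] by blast
    then show ?thesis using True by (intro exI[of _ y]) simp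
  next
    case False
    then obtain p where p: "p < 9" "a p \<noteq> 0" by auto
    obtain y where y: "(\<Sum>t<9. a t * y t) = 0" "dd y \<noteq> 0" using one_eq[of a] by blast
    have "a p * (\<Sum>t<9. b t * y t) = (\<Sum>t<9. (a p * b t) * y t)"
      by (simp add: sum_distrib_left mult.assoc)
    also have "\<dots> = (\<Sum>t<9. (b p * a t) * y t)"
      by (rule sum.cong) (use mz p in \<open>auto simp: mult.commute\<close>)
    also have "\<dots> = b p * (\<Sum>t<9. a t * y t)"
      by (simp add: sum_distrib_left mult.assoc)
    finally have "(\<Sum>t<9. b t * y t) = 0" using y p by simp
    then show ?thesis using y by blast
  qed
qed

definition d3f :: "(nat \<Rightarrow> nat \<Rightarrow> 'a::comm_ring_1) \<Rightarrow> 'a" where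
  "d3f A = A 0 0 * A 1 1 * A 2 2 + A 1 0 * A 2 1 * A 0 2 + A 2 0 * A 0 1 * A 1 2
     - A 0 0 * A 2 1 * A 1 2 - A 1 0 * A 0 1 * A 2 2 - A 2 0 * A 1 1 * A 0 2"

lemma det3_d3f: "det3 A = d3f A"
  unfolding det3_explicit d3f_def ..

lemma ev_d3f: "ev (d3f A) x = d3f (\<lambda>a b. ev (A a b) x)"
  by (simp add: d3f_def ev_add ev_diff ev_mult)

lemma ev_minor: "ev (minor_del k) x = d3f (\<lambda>a b. x (3 * (if a < k then a else a + 1) + b))"
  unfolding minor_del_def det3_d3f ev_d3f genM_def by simp

definition lin :: "(nat \<Rightarrow> complex) \<Rightarrow> (nat \<Rightarrow> complex) \<Rightarrow> complex" where
  "lin a x = (\<Sum>i<12. a i * x i)"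

lemma core:
  assumes "c r \<noteq> 0" "r < 3"
  shows "\<exists>x. lin \<alpha> x = 0 \<and> lin \<beta> x = 0 \<and> (\<Sum>i<3. c i * ev (minor_del i) x) \<noteq> 0"
proof -
  define \<alpha>' where "\<alpha>' t = (if t < 3*r then \<alpha> t else \<alpha> (t+3))" for t
  define \<beta>' where "\<beta>' t = (if t < 3*r then \<beta> t else \<beta> (t+3))" for t
  obtain y where y: "(\<Sum>t<9. \<alpha>' t * y t) = 0" "(\<Sum>t<9. \<beta>' t * y t) = 0" "dd y \<noteq> 0"
    using lemma9 by blast
  define x where "x n = (if n < 3*r then y n else if n < 3*r+3 then 0 else y (n-3))" for n
  have r: "r = 0 \<or> r = 1 \<or> r = 2" using assms by auto
  have 1: "lin \<alpha> x = (\<Sum>t<9. \<alpha>' t * y t)" "lin \<beta> x = (\<Sum>t<9. \<beta>' t * y t)"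
    using r by (auto simp: lin_def x_def \<alpha>'_def \<beta>'_def lessThan_nat_numeral lessThan_Suc)
  have 2: "(\<Sum>i<3. c i * ev (minor_del i) x) = c r * dd y"
    using r by (auto simp: ev_minor d3f_def dd_def x_def lessThan_nat_numeral lessThan_Suc algebra_simps eval_nat_numeral)
  show ?thesis using 1 2 y assms(1) by auto
qed

lemma mdeg_superset: "finite S \<Longrightarrow> Poly_Mapping.keys m \<subseteq> S \<Longrightarrow> mdeg m = (\<Sum>i\<in>S. Poly_Mapping.lookup m i)"
  unfolding mdeg_def by (rule sum.mono_neutral_left) (auto simp: in_keys_iff)

lemma mdeg_add: "mdeg (m1 + m2) = mdeg m1 + mdeg m2"
proof -
  let ?S = "Poly_Mapping.keys m1 \<union> Poly_Mapping.keys m2"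
  have k: "Poly_Mapping.keys (m1+m2) \<subseteq> ?S" by (rule keys_add)
  show ?thesis
    by (subst mdeg_superset[OF _ k], simp, subst mdeg_superset[of ?S m1], simp, simp,
        subst mdeg_superset[of ?S m2], simp, simp)
       (simp add: lookup_add sum.distrib)
qed

lemma mdeg_single[simp]: "mdeg (Poly_Mapping.single i k) = k"
  by (simp add: mdeg_def)

lemma mdeg_zero[simp]: "mdeg 0 = 0" by (simp add: mdeg_def)

lemma mdeg_1:
  assumes "mdeg m = 1" shows "\<exists>i. m = Poly_Mapping.single i 1"
proof -
  have ne: "Poly_Mapping.keys m \<noteq> {}" using assms by (auto simp: mdeg_def)
  then obtain i where i: "i \<in> Poly_Mapping.keys m" by blast
  have fin: "finite (Poly_Mapping.keys m)" by simp
  have s: "mdeg m = Poly_Mapping.lookup m i + (\<Sum>j\<in>Poly_Mapping.keys m - {i}. Poly_Mapping.lookup m j)"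
    unfolding mdeg_def using i fin by (simp add: sum.remove)
  have pos: "Poly_Mapping.lookup m i \<ge> 1" using i by (simp add: in_keys_iff)
  then have l: "Poly_Mapping.lookup m i = 1" and r: "(\<Sum>j\<in>Poly_Mapping.keys m - {i}. Poly_Mapping.lookup m j) = 0"
    using s assms by linarith+
  have "\<forall>j\<in>Poly_Mapping.keys m - {i}. Poly_Mapping.lookup m j = 0" using r fin by simp
  then have "\<And>j. j \<noteq> i \<Longrightarrow> Poly_Mapping.lookup m j = 0" by (auto simp: in_keys_iff)
  then have "m = Poly_Mapping.single i 1"
    by (intro poly_mapping_eqI) (auto simp: lookup_single l when_def)
  then show ?thesis by blast
qed

lemma hom_zero[simp]: "homogeneous d 0" by (simp add: homogeneous_def)

lemma hom_add: "homogeneous d p \<Longrightarrow> homogeneous d q \<Longrightarrow> homogeneous d (p + q)"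
  unfolding homogeneous_def
proof
  fix m assume "\<forall>m\<in>Poly_Mapping.keys p. mdeg m = d" "\<forall>m\<in>Poly_Mapping.keys q. mdeg m = d"
    "m \<in> Poly_Mapping.keys (p + q)"
  moreover have "Poly_Mapping.keys (p + q) \<subseteq> Poly_Mapping.keys p \<union> Poly_Mapping.keys q" by (rule keys_add)
  ultimately show "mdeg m = d" by blast
qed

lemma keys_uminus': "Poly_Mapping.keys (- (p::cpoly)) = Poly_Mapping.keys p"
  unfolding in_keys_iff by simp

lemma keys_ne: "(p::cpoly) \<noteq> 0 \<Longrightarrow> \<exists>m. m \<in> Poly_Mapping.keys p"
proof (rule ccontr)
  assume "p \<noteq> 0" "\<not> (\<exists>m. m \<in> Poly_Mapping.keys p)"
  then have "\<And>m. Poly_Mapping.lookup p m = 0" by (auto simp: in_keys_iff)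
  then have "p = 0" by (intro poly_mapping_eqI) simp
  then show False using \<open>p \<noteq> 0\<close> by simp
qed

lemma hom_uminus: "homogeneous d p \<Longrightarrow> homogeneous d (- p)"
  unfolding homogeneous_def by (simp add: keys_uminus')

lemma hom_diff: "homogeneous d p \<Longrightarrow> homogeneous d q \<Longrightarrow> homogeneous d (p - q)"
  using hom_add[of d p "-q"] hom_uminus[of d q] by simp

lemma hom_mult: "homogeneous a p \<Longrightarrow> homogeneous b q \<Longrightarrow> homogeneous (a + b) (p * q)"
  unfolding homogeneous_def
proof
  fix m assume h: "\<forall>m\<in>Poly_Mapping.keys p. mdeg m = a" "\<forall>m\<in>Poly_Mapping.keys q. mdeg m = b"
    and m: "m \<in> Poly_Mapping.keys (p * q)"
  then obtain m1 m2 where "m = m1 + m2" "m1 \<in> Poly_Mapping.keys p" "m2 \<in> Poly_Mapping.keys q"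
    using keys_mult[of p q] by blast
  then show "mdeg m = a + b" using h by (simp add: mdeg_add)
qed

lemma hom_var[simp]: "homogeneous 1 (var i)"
  by (simp add: homogeneous_def var_def)

lemma hom_unique: "homogeneous a p \<Longrightarrow> homogeneous b p \<Longrightarrow> p \<noteq> 0 \<Longrightarrow> a = b"
proof -
  assume h: "homogeneous a p" "homogeneous b p" "p \<noteq> 0"
  then obtain m where "m \<in> Poly_Mapping.keys p" using keys_ne by blast
  then show "a = b" using h by (auto simp: homogeneous_def)
qed

lemma pin_zero[simp]: "0 \<in> polys_in V" by (simp add: polys_in_def)

lemma pin_add: "p \<in> polys_in V \<Longrightarrow> q \<in> polys_in V \<Longrightarrow> p + q \<in> polys_in V"
  unfolding polys_in_def
proof (intro CollectI ballI)
  fix m assume "p \<in> {p. \<forall>m\<in>Poly_Mapping.keys p. Poly_Mapping.keys m \<subseteq> V}"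
    "q \<in> {p. \<forall>m\<in>Poly_Mapping.keys p. Poly_Mapping.keys m \<subseteq> V}" "m \<in> Poly_Mapping.keys (p + q)"
  moreover have "Poly_Mapping.keys (p + q) \<subseteq> Poly_Mapping.keys p \<union> Poly_Mapping.keys q" by (rule keys_add)
  ultimately show "Poly_Mapping.keys m \<subseteq> V" by blast
qed

lemma pin_uminus: "p \<in> polys_in V \<Longrightarrow> - p \<in> polys_in V"
  unfolding polys_in_def by (simp add: keys_uminus')

lemma pin_diff: "p \<in> polys_in V \<Longrightarrow> q \<in> polys_in V \<Longrightarrow> p - q \<in> polys_in V"
  using pin_add[of p V "-q"] pin_uminus[of q V] by simp

lemma pin_mult: "p \<in> polys_in V \<Longrightarrow> q \<in> polys_in V \<Longrightarrow> p * q \<in> polys_in V"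
  unfolding polys_in_def
proof (intro CollectI ballI)
  fix m assume h: "p \<in> {p. \<forall>m\<in>Poly_Mapping.keys p. Poly_Mapping.keys m \<subseteq> V}"
    "q \<in> {p. \<forall>m\<in>Poly_Mapping.keys p. Poly_Mapping.keys m \<subseteq> V}" and m: "m \<in> Poly_Mapping.keys (p * q)"
  then obtain m1 m2 where mm: "m = m1 + m2" "m1 \<in> Poly_Mapping.keys p" "m2 \<in> Poly_Mapping.keys q"
    using keys_mult[of p q] by blast
  have "Poly_Mapping.keys (m1 + m2) \<subseteq> Poly_Mapping.keys m1 \<union> Poly_Mapping.keys m2" by (rule keys_add)
  then show "Poly_Mapping.keys m \<subseteq> V" using h mm by blast
qed

lemma pin_var: "i \<in> V \<Longrightarrow> var i \<in> polys_in V"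
  by (simp add: polys_in_def var_def)

lemma hom_d3f: "(\<And>a b. a < 3 \<Longrightarrow> b < 3 \<Longrightarrow> homogeneous 1 (A a b)) \<Longrightarrow> homogeneous 3 (d3f A)"
proof -
  assume h: "\<And>a b. a < 3 \<Longrightarrow> b < 3 \<Longrightarrow> homogeneous 1 (A a b)"
  have t: "\<And>a b c d e f. a < 3 \<Longrightarrow> b < 3 \<Longrightarrow> c < 3 \<Longrightarrow> d < 3 \<Longrightarrow> e < 3 \<Longrightarrow> f < 3 \<Longrightarrow>
      homogeneous 3 (A a b * A c d * A e f)"
  proof -
    fix a b c d e f :: nat
    assume "a < 3" "b < 3" "c < 3" "d < 3" "e < 3" "f < 3"
    then have "homogeneous (1 + 1 + 1) (A a b * A c d * A e f)"
      using h by (intro hom_mult) auto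
    then show "homogeneous 3 (A a b * A c d * A e f)" by (simp add: numeral_3_eq_3)
  qed
  show ?thesis unfolding d3f_def by (intro hom_diff hom_add t) auto
qed

lemma pin_d3f: "(\<And>a b. a < 3 \<Longrightarrow> b < 3 \<Longrightarrow> A a b \<in> polys_in V) \<Longrightarrow> d3f A \<in> polys_in V"
  unfolding d3f_def by (intro pin_diff pin_add pin_mult) auto

lemma minor_hom: "homogeneous 3 (minor_del k)"
  unfolding minor_del_def det3_d3f genM_def by (rule hom_d3f) (rule hom_var)

lemma minor_pin: "k < 3 \<Longrightarrow> minor_del k \<in> polys_in {..<12}"
  unfolding minor_del_def det3_d3f genM_def by (rule pin_d3f) (auto intro!: pin_var)

lemma lin_form:
  assumes "homogeneous 1 l" "l \<in> polys_in {..<12}"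
  shows "ev l x = lin (\<lambda>i. Poly_Mapping.lookup l (Poly_Mapping.single i 1)) x"
proof -
  let ?S = "(\<lambda>i::nat. Poly_Mapping.single i (1::nat)) ` {..<12}"
  have sub: "Poly_Mapping.keys l \<subseteq> ?S"
  proof
    fix m assume m: "m \<in> Poly_Mapping.keys l"
    then have "mdeg m = 1" using assms(1) by (simp add: homogeneous_def)
    then obtain i where i: "m = Poly_Mapping.single i 1" using mdeg_1 by blast
    have "i < 12" using assms(2) m i by (auto simp: polys_in_def)
    then show "m \<in> ?S" using i by auto
  qed
  have inj: "inj_on (\<lambda>i::nat. Poly_Mapping.single i (1::nat)) {..<12}"
    unfolding inj_on_def by (metis lookup_single_eq lookup_single_not_eq one_neq_zero)
  show ?thesis
    by (subst ev_superset[OF _ sub], simp, subst sum.reindex[OF inj])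
       (simp add: lin_def mon_def)
qed

lemma keys_ideal_deg:
  assumes "homogeneous 3 f" "m \<in> Poly_Mapping.keys (a * f)"
  shows "mdeg m \<ge> 3"
proof -
  obtain m1 m2 where "m = m1 + m2" "m1 \<in> Poly_Mapping.keys a" "m2 \<in> Poly_Mapping.keys f"
    using keys_mult[of a f] assms(2) by blast
  then show ?thesis using assms(1) by (simp add: homogeneous_def mdeg_add)
qed

lemma ev_nonzero_ne: "ev p x \<noteq> 0 \<Longrightarrow> p \<noteq> 0" by auto

lemma hom_const_zero: "homogeneous 3 p \<Longrightarrow> is_constant p \<Longrightarrow> p = 0"
  unfolding homogeneous_def is_constant_def using keys_ne by fastforce

lemma term_lin:
  assumes "homogeneous a g" "homogeneous b h" "a > 0" "b > 0"
    "g \<in> polys_in {..<12}" "h \<in> polys_in {..<12}" "g * h = 0 \<or> a + b = 3"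
  shows "\<exists>\<alpha>. \<forall>x. lin \<alpha> x = 0 \<longrightarrow> ev (g * h) x = 0"
proof (cases "g * h = 0")
  case True then show ?thesis by (intro exI[of _ "\<lambda>_. 0"]) (simp only: True ev_zero, simp)
next
  case False
  then have "a + b = 3" using assms by simp
  then have "a = 1 \<or> b = 1" using assms(3,4) by linarith
  then show ?thesis
  proof
    assume "a = 1"
    then have "\<And>x. ev g x = lin (\<lambda>i. Poly_Mapping.lookup g (Poly_Mapping.single i 1)) x"
      using assms lin_form by simp
    then show ?thesis by (auto simp: ev_mult)
  next
    assume "b = 1"
    then have "\<And>x. ev h x = lin (\<lambda>i. Poly_Mapping.lookup h (Poly_Mapping.single i 1)) x"
      using assms lin_form by simp
    then show ?thesis by (auto simp: ev_mult)
  qed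
qed

lemma aux_deg:
  assumes "homogeneous 3 F" "F \<noteq> 0" "F = T0 + T1" "homogeneous d0 T0" "homogeneous d1 T1" "T0 \<noteq> 0"
  shows "d0 = 3"
proof (rule ccontr)
  assume ne: "d0 \<noteq> 3"
  obtain m where m: "m \<in> Poly_Mapping.keys T0" using keys_ne assms(6) by blast
  then have md: "mdeg m = d0" using assms(4) by (simp add: homogeneous_def)
  then have "m \<notin> Poly_Mapping.keys F" using assms(1) ne by (auto simp: homogeneous_def)
  then have "Poly_Mapping.lookup T0 m + Poly_Mapping.lookup T1 m = 0"
    using assms(3) by (simp add: in_keys_iff lookup_add)
  moreover have "Poly_Mapping.lookup T0 m \<noteq> 0" using m by (simp add: in_keys_iff)
  ultimately have "m \<in> Poly_Mapping.keys T1" by (auto simp: in_keys_iff)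
  then have "d1 = d0" using assms(5) md by (simp add: homogeneous_def)
  then have "homogeneous d0 F" using assms(3,4,5) hom_add by simp
  then show False using hom_unique[OF assms(1) _ assms(2)] ne by auto
qed

lemma two_terms:
  assumes F: "homogeneous 3 F" "F \<noteq> 0" and e: "F = g0 * h0 + g1 * h1"
    and h: "homogeneous a0 g0" "homogeneous b0 h0" "homogeneous a1 g1" "homogeneous b1 h1"
    and p: "a0 > 0" "b0 > 0" "a1 > 0" "b1 > 0"
    and i: "g0 \<in> polys_in {..<12}" "h0 \<in> polys_in {..<12}" "g1 \<in> polys_in {..<12}" "h1 \<in> polys_in {..<12}"
  shows "\<exists>\<alpha> \<beta>. \<forall>x. lin \<alpha> x = 0 \<and> lin \<beta> x = 0 \<longrightarrow> ev F x = 0"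
proof -
  have t0: "homogeneous (a0 + b0) (g0 * h0)" using h by (simp add: hom_mult)
  have t1: "homogeneous (a1 + b1) (g1 * h1)" using h by (simp add: hom_mult)
  have "g0 * h0 \<noteq> 0 \<Longrightarrow> a0 + b0 = 3" using aux_deg[OF F e t0 t1] by blast
  then have c0: "g0 * h0 = 0 \<or> a0 + b0 = 3" by blast
  have "g1 * h1 \<noteq> 0 \<Longrightarrow> a1 + b1 = 3"
    by (rule aux_deg[OF F _ t1 t0]) (use e in \<open>simp_all add: add.commute\<close>)
  then have c1: "g1 * h1 = 0 \<or> a1 + b1 = 3" by blast
  obtain \<alpha> where \<alpha>: "\<forall>x. lin \<alpha> x = 0 \<longrightarrow> ev (g0 * h0) x = 0"
    using term_lin[OF h(1,2) p(1,2) i(1,2) c0] by blast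
  obtain \<beta> where \<beta>: "\<forall>x. lin \<beta> x = 0 \<longrightarrow> ev (g1 * h1) x = 0"
    using term_lin[OF h(3,4) p(3,4) i(3,4) c1] by blast
  show ?thesis using \<alpha> \<beta> e by (intro exI[of _ \<alpha>] exI[of _ \<beta>]) (simp add: ev_add)
qed

definition Fc :: "(nat \<Rightarrow> complex) \<Rightarrow> cpoly" where
  "Fc c = (\<Sum>i<3. const_poly (c i) * minor_del i)"

lemma hom_const: "homogeneous 0 (const_poly c)"
  by (simp add: homogeneous_def const_poly_def)

lemma pin_const: "const_poly c \<in> polys_in V"
  by (simp add: polys_in_def const_poly_def)

lemma Fc_hom: "homogeneous 3 (Fc c)"
proof -
  have "\<And>i. homogeneous (0 + 3) (const_poly (c i) * minor_del i)"
    by (rule hom_mult[OF hom_const minor_hom])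
  then have "\<And>i. homogeneous 3 (const_poly (c i) * minor_del i)" by simp
  then show ?thesis unfolding Fc_def by (simp add: lessThan_nat_numeral hom_add)
qed

lemma ev_Fc: "ev (Fc c) x = (\<Sum>i<3. c i * ev (minor_del i) x)"
  by (simp add: Fc_def ev_sum ev_mult)

lemma Fc_good:
  assumes "i < 3" "c i \<noteq> 0"
  shows "\<exists>x. lin \<alpha> x = 0 \<and> lin \<beta> x = 0 \<and> ev (Fc c) x \<noteq> 0"
  using core[of c i, OF assms(2,1)] by (simp add: ev_Fc)

lemma Fc_nonzero: "i < 3 \<Longrightarrow> c i \<noteq> 0 \<Longrightarrow> Fc c \<noteq> 0"
  using Fc_good[of i c "\<lambda>_. 0" "\<lambda>_. 0"] by auto

lemma Fc_not_const: "i < 3 \<Longrightarrow> c i \<noteq> 0 \<Longrightarrow> \<not> is_constant (Fc c)"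
  using Fc_nonzero hom_const_zero Fc_hom by blast

lemma pos_formE: "pos_form V g \<Longrightarrow> \<exists>d>0. homogeneous d g \<and> g \<in> polys_in V"
  by (auto simp: pos_form_def)

lemma no_small_decomp:
  fixes g h :: "nat \<Rightarrow> cpoly" and s :: nat
  assumes "i < 3" "c i \<noteq> 0" "s \<le> 1"
    and "\<forall>j\<le>s. pos_form {..<12} (g j) \<and> pos_form {..<12} (h j)"
    and "Fc c = (\<Sum>j\<le>s. g j * h j)"
  shows False
proof -
  obtain a0 where a0: "a0 > 0" "homogeneous a0 (g 0)" "g 0 \<in> polys_in {..<12}"
    using assms(4) pos_formE by blast
  obtain b0 where b0: "b0 > 0" "homogeneous b0 (h 0)" "h 0 \<in> polys_in {..<12}"
    using assms(4) pos_formE by blast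
  have "\<exists>g1 h1 a1 b1. Fc c = g 0 * h 0 + g1 * h1 \<and> homogeneous a1 g1 \<and> homogeneous b1 h1
      \<and> a1 > 0 \<and> b1 > 0 \<and> g1 \<in> polys_in {..<12} \<and> h1 \<in> polys_in {..<12}"
  proof (cases "s = 0")
    case True
    then show ?thesis using assms(5)
      by (intro exI[of _ 0] exI[of _ 0] exI[of _ 1] exI[of _ 1]) simp
  next
    case False
    then have s: "s = 1" using assms(3) by simp
    obtain a1 where a1: "a1 > 0" "homogeneous a1 (g 1)" "g 1 \<in> polys_in {..<12}"
      using assms(4) s pos_formE by blast
    obtain b1 where b1: "b1 > 0" "homogeneous b1 (h 1)" "h 1 \<in> polys_in {..<12}"
      using assms(4) s pos_formE by blast
    show ?thesis using assms(5) s a1 b1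
      by (intro exI[of _ "g 1"] exI[of _ "h 1"] exI[of _ a1] exI[of _ b1]) simp
  qed
  then obtain g1 h1 a1 b1 where d: "Fc c = g 0 * h 0 + g1 * h1" "homogeneous a1 g1" "homogeneous b1 h1"
      "a1 > 0" "b1 > 0" "g1 \<in> polys_in {..<12}" "h1 \<in> polys_in {..<12}" by blast
  obtain \<alpha> \<beta> where ab: "\<forall>x. lin \<alpha> x = 0 \<and> lin \<beta> x = 0 \<longrightarrow> ev (Fc c) x = 0"
    using two_terms[OF Fc_hom Fc_nonzero[of i c, OF assms(1,2)] d(1) a0(2) b0(2) d(2,3) a0(1) b0(1) d(4,5)
       a0(3) b0(3) d(6,7)] by blast
  obtain x where "lin \<alpha> x = 0" "lin \<beta> x = 0" "ev (Fc c) x \<noteq> 0"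
    using Fc_good[of i c, OF assms(1,2)] by blast
  then show False using ab by blast
qed

lemma strength_Fc_ge: "i < 3 \<Longrightarrow> c i \<noteq> 0 \<Longrightarrow> strength {..<12} (Fc c) \<ge> 2"
proof -
  assume a: "i < 3" "c i \<noteq> 0"
  have "\<forall>y \<in> {ereal (real s) | s::nat. \<exists>g h. (\<forall>j\<le>s. pos_form {..<12} (g j) \<and> pos_form {..<12} (h j))
                                  \<and> Fc c = (\<Sum>j\<le>s. g j * h j)}. 2 \<le> y"
  proof
    fix y assume "y \<in> {ereal (real s) | s::nat. \<exists>g h. (\<forall>j\<le>s. pos_form {..<12} (g j) \<and> pos_form {..<12} (h j))
                                  \<and> Fc c = (\<Sum>j\<le>s. g j * h j)}"
    then obtain s g h where y: "y = ereal (real s)" "\<forall>j\<le>s. pos_form {..<12} (g j) \<and> pos_form {..<12} (h j)"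
      "Fc c = (\<Sum>j\<le>s. g j * h j)" by blast
    have "\<not> s \<le> 1" using no_small_decomp[OF a _ y(2,3)] by blast
    then show "2 \<le> y" using y(1) by simp
  qed
  then show ?thesis using Fc_not_const[of i c, OF a] by (simp add: strength_def le_Inf_iff)
qed

lemma sum_le2: "(\<Sum>j\<le>(2::nat). f j) = f 0 + f 1 + (f 2 :: 'a::comm_monoid_add)"
  by (simp add: numeral_2_eq_2 atMost_Suc add.commute add.left_commute)

lemma sum_lt3: "(\<Sum>j<(3::nat). f j) = f 0 + f 1 + (f 2 :: 'a::comm_monoid_add)"
  by (simp add: numeral_3_eq_3 lessThan_Suc add.commute add.left_commute numeral_2_eq_2)

lemma sum_lt2: "(\<Sum>j<(2::nat). f j) = f 0 + (f 1 :: 'a::comm_monoid_add)"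
  by (simp add: lessThan_Suc add.commute numeral_2_eq_2)

abbreviation "fs3 \<equiv> [minor_del 0, minor_del 1, minor_del 2]"

lemma len3: "length fs3 = 3" by simp

lemma fs_sum: "(\<Sum>i<length fs3. const_poly (c i) * fs3 ! i) = Fc c"
  unfolding len3 Fc_def sum_lt3 by simp

lemma coll_ge: "coll_strength {..<12} fs3 \<ge> 2"
  unfolding coll_strength_def
proof (rule Inf_greatest)
  fix y assume "y \<in> {strength {..<12} (\<Sum>i<length fs3. const_poly (c i) * fs3 ! i) | c.
       \<exists>i<length fs3. c i \<noteq> 0}"
  then obtain c i where "y = strength {..<12} (\<Sum>i<length fs3. const_poly (c i) * fs3 ! i)" "i < 3" "c i \<noteq> 0"
    unfolding len3 by blast
  then have "y = strength {..<12} (Fc c)" "i < 3" "c i \<noteq> 0" using fs_sum[of c] by metis+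
  then show "2 \<le> y" using strength_Fc_ge by blast
qed

lemma pos_var: "i < 12 \<Longrightarrow> pos_form {..<12} (var i)"
  unfolding pos_form_def using pin_var[of i "{..<12}"] hom_var[of i] by auto

lemma pos_quad: "i < 12 \<Longrightarrow> j < 12 \<Longrightarrow> k < 12 \<Longrightarrow> l < 12 \<Longrightarrow>
   pos_form {..<12} (var i * var j - var k * var l)"
  unfolding pos_form_def
  using hom_diff[OF hom_mult[OF hom_var[of i] hom_var[of j]] hom_mult[OF hom_var[of k] hom_var[of l]]]
  by (intro conjI pin_diff pin_mult pin_var exI[of _ 2]) (auto simp: numeral_2_eq_2)

lemma strength_m0: "strength {..<12} (minor_del 0) \<le> 2"
proof -
  have nc: "\<not> is_constant (minor_del 0)"
  proof -
    have "Fc (\<lambda>i. if i = 0 then 1 else 0) = minor_del 0"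
      by (simp add: Fc_def sum_lt3 const_poly_def)
    then show ?thesis using Fc_not_const[of 0 "\<lambda>i. if i = 0 then 1 else 0"] by simp
  qed
  define g where "g j = var (3 * (j + 1))" for j :: nat
  define h where "h j = (if j = 0 then var 7 * var 11 - var 10 * var 8
      else if j = 1 then var 10 * var 5 - var 4 * var 11 else var 4 * var 8 - var 7 * var 5)" for j :: nat
  have dec: "minor_del 0 = (\<Sum>j\<le>2. g j * h j)"
    unfolding sum_le2 by (simp add: minor_del_def det3_d3f d3f_def genM_def g_def h_def algebra_simps)
  have pf: "\<forall>j\<le>2. pos_form {..<12} (g j) \<and> pos_form {..<12} (h j)"
  proof (intro allI impI conjI)
    fix j :: nat assume "j \<le> 2"
    then show "pos_form {..<12} (g j)" unfolding g_def by (intro pos_var) auto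
    show "pos_form {..<12} (h j)" unfolding h_def by (auto intro!: pos_quad)
  qed
  have "ereal (real (2::nat)) \<in> {ereal (real s) | s::nat. \<exists>g h. (\<forall>i\<le>s. pos_form {..<12} (g i) \<and> pos_form {..<12} (h i))
                                  \<and> minor_del 0 = (\<Sum>i\<le>s. g i * h i)}"
    using dec pf by blast
  then have "Inf {ereal (real s) | s::nat. \<exists>g h. (\<forall>i\<le>s. pos_form {..<12} (g i) \<and> pos_form {..<12} (h i))
                                  \<and> minor_del 0 = (\<Sum>i\<le>s. g i * h i)} \<le> ereal (real (2::nat))"
    by (rule Inf_lower)
  then show ?thesis using nc by (simp add: strength_def)
qed


lemma coll_le: "coll_strength {..<12} fs3 \<le> 2"
proof -
  have "strength {..<12} (\<Sum>i<length fs3. const_poly ((\<lambda>i. if i = 0 then 1 else 0) i) * fs3 ! i)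
     \<in> {strength {..<12} (\<Sum>i<length fs3. const_poly (c i) * fs3 ! i) | c. \<exists>i<length fs3. c i \<noteq> 0}"
    by (intro CollectI exI[of _ "\<lambda>i. if i = 0 then 1 else 0"]) auto
  moreover have "(\<Sum>i<length fs3. const_poly ((\<lambda>i. if i = 0 then (1::complex) else 0) i) * fs3 ! i) = minor_del 0"
    by (simp add: sum_lt3 const_poly_def)
  ultimately show ?thesis unfolding coll_strength_def
    by (metis (no_types, lifting) Inf_lower2 strength_m0)
qed

lemma coll_eq: "coll_strength {..<12} fs3 = 2"
  using coll_ge coll_le by (rule antisym[rotated])

lemma syz: "(var 10 * var 6 - var 9 * var 7) * minor_del 2 =
   (- (var 10 * var 0 - var 9 * var 1)) * minor_del 0 + (var 10 * var 3 - var 9 * var 4) * minor_del 1"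
  by (simp add: minor_del_def det3_d3f d3f_def genM_def algebra_simps)

lemma var_mult: "var i * var j = Poly_Mapping.single (Poly_Mapping.single i 1 + Poly_Mapping.single j 1) 1"
  by (simp add: var_def mult_single)

lemma g_not_in:
  assumes "var 10 * var 6 - var 9 * var 7 = a0 * minor_del 0 + a1 * minor_del 1"
  shows False
proof -
  define m where "m = Poly_Mapping.single (10::nat) (1::nat) + Poly_Mapping.single 6 1"
  have ne: "Poly_Mapping.single (9::nat) (1::nat) + Poly_Mapping.single 7 1 \<noteq> m"
  proof
    assume "Poly_Mapping.single (9::nat) (1::nat) + Poly_Mapping.single 7 1 = m"
    then have "Poly_Mapping.lookup (Poly_Mapping.single (9::nat) (1::nat) + Poly_Mapping.single 7 1) 10 = Poly_Mapping.lookup m 10"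
      by simp
    then show False by (simp add: m_def lookup_add lookup_single)
  qed
  have "Poly_Mapping.lookup (var 10 * var 6 - var 9 * var 7) m = 1"
    using ne by (simp add: var_mult lookup_minus lookup_single m_def when_def)
  then have mk: "m \<in> Poly_Mapping.keys (a0 * minor_del 0 + a1 * minor_del 1)"
    using assms by (simp add: in_keys_iff)
  have md: "mdeg m = 2" by (simp add: m_def mdeg_add)
  have "Poly_Mapping.keys (a0 * minor_del 0 + a1 * minor_del 1) \<subseteq>
        Poly_Mapping.keys (a0 * minor_del 0) \<union> Poly_Mapping.keys (a1 * minor_del 1)" by (rule keys_add)
  then have "mdeg m \<ge> 3" using mk keys_ideal_deg[OF minor_hom] by blast
  then show False using md by simp
qed

lemma not_regular: "\<not> regular_seq {..<12} fs3"
proof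
  assume r: "regular_seq {..<12} fs3"
  define g where "g = var 10 * var 6 - var 9 * var 7"
  have gp: "g \<in> polys_in {..<12}" unfolding g_def by (intro pin_diff pin_mult pin_var) auto
  define a where "a j = (if j = 0 then - (var 10 * var 0 - var 9 * var 1) else var 10 * var 3 - var 9 * var 4)" for j :: nat
  have ap: "\<forall>j<length (take 2 fs3). a j \<in> polys_in {..<12}"
    unfolding a_def by (auto intro!: pin_diff pin_mult pin_var pin_uminus)
  have t: "take 2 fs3 = [minor_del 0, minor_del 1]" by (simp add: numeral_2_eq_2)
  have l2: "length [minor_del 0, minor_del 1] = 2" by simp
  have "g * fs3 ! 2 = (\<Sum>j<length (take 2 fs3). a j * take 2 fs3 ! j)"
    unfolding t l2 sum_lt2 by (simp add: g_def a_def syz)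
  then have "g * fs3 ! 2 \<in> ideal_gen {..<12} (take 2 fs3)"
    unfolding ideal_gen_def using ap by blast
  then have "g \<in> ideal_gen {..<12} (take 2 fs3)" using r gp unfolding regular_seq_def by auto
  then obtain b where "g = (\<Sum>j<length (take 2 fs3). b j * take 2 fs3 ! j)"
    unfolding ideal_gen_def by blast
  then have "g = b 0 * minor_del 0 + b 1 * minor_del 1"
    unfolding t l2 sum_lt2 by simp
  then show False using g_not_in unfolding g_def by blast
qed

lemma N_rd_gt: "N_rd 3 3 > 2"
proof -
  let ?S = "{ereal (real_of_int N) | N::int. \<forall>n fs.
      (length fs = 3 \<and> (\<forall>f\<in>set fs. f \<in> polys_in {..<n} \<and> homogeneous 3 f)
       \<and> coll_strength {..<n} fs \<ge> ereal (real_of_int N)) \<longrightarrow> regular_seq {..<n} fs}"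
  have "\<forall>y\<in>?S. 3 \<le> y"
  proof
    fix y assume "y \<in> ?S"
    then obtain N :: int where y: "y = ereal (real_of_int N)" and P: "\<forall>n fs.
      (length fs = 3 \<and> (\<forall>f\<in>set fs. f \<in> polys_in {..<n} \<and> homogeneous 3 f)
       \<and> coll_strength {..<n} fs \<ge> ereal (real_of_int N)) \<longrightarrow> regular_seq {..<n} fs" by blast
    have "\<not> N \<le> 2"
    proof
      assume "N \<le> 2"
      then have "coll_strength {..<12} fs3 \<ge> ereal (real_of_int N)" using coll_eq by simp
      moreover have "\<forall>f\<in>set fs3. f \<in> polys_in {..<12} \<and> homogeneous 3 f"
        using minor_pin minor_hom by auto
      ultimately have "regular_seq {..<12} fs3" using P by auto
      then show False using not_regular by blast
    qed
    then show "3 \<le> y" using y by simp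
  qed
  then have "3 \<le> Inf ?S" by (simp add: le_Inf_iff)
  then show ?thesis unfolding N_rd_def by (rule less_le_trans[rotated]) simp
qed

theorem theorem7p4:
  shows "(\<forall>k<3. minor_del k \<in> polys_in {..<12} \<and> homogeneous 3 (minor_del k))
         \<and> \<not> regular_seq {..<12} [minor_del 0, minor_del 1, minor_del 2]
         \<and> coll_strength {..<12} [minor_del 0, minor_del 1, minor_del 2] = 2
         \<and> N_rd 3 3 > 2"
  using minor_pin minor_hom not_regular coll_eq N_rd_gt by blast

end
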